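(* If $\Gamma$ is a symmetric bimatrix game with $m=2$ strategies per player, then $\mathrm{conv}(\mathrm{Nash}_{\mathrm{sym}}(\Gamma))=\mathrm{XE}_{\mathrm{sym}}(\Gamma)$.
   Context: A symmetric bimatrix game: two players with the same finite strategy set $C_1$ and utilities with $u_1(s_1,s_2)=u_2(s_2,s_1)$. Distributions on $C_1\times C_1$ are identified with nonnegative matrices summing to one. A correlated equilibrium is a distribution $\pi$ with $\sum_{s_{-i}}[u_i(t_i,s_{-i})-u_i(s)]\pi(s)\le0$ for each player $i$ and all $s_i,t_i$. $\mathrm{Nash}_{\mathrm{sym}}(\Gamma)$ is the set of symmetric Nash equilibria, viewed as matrices $xx^T$ ($x$ a probability vector) that are correlated equilibria. $\mathrm{XE}_{\mathrm{sym}}(\Gamma)$ (exchangeable equilibria) is the set of correlated equilibria lying in $\mathrm{conv}\{xx^T:x\text{ a probability vector on }C_1\}$. *)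

theory Defs
  imports "HOL-Analysis.Analysis"
begin

text \<open>The game is given by player 1's utility u, u1(s1,s2) = u s1 s2; player 2's
  utility is then forced by symmetry: u2(s1,s2) = u1(s2,s1) = u s2 s1.
  Distributions on C1 x C1 are matrices P :: real^'a^'a, entry P$s1$s2.\<close>

definition util1 :: "('a \<Rightarrow> 'a \<Rightarrow> real) \<Rightarrow> 'a \<Rightarrow> 'a \<Rightarrow> real" where
  "util1 u s1 s2 = u s1 s2"

definition util2 :: "('a \<Rightarrow> 'a \<Rightarrow> real) \<Rightarrow> 'a \<Rightarrow> 'a \<Rightarrow> real" where
  "util2 u s1 s2 = u s2 s1"

definition prob_vec :: "real^'a::finite \<Rightarrow> bool" where
  "prob_vec x \<longleftrightarrow> (\<forall>i. 0 \<le> x$i) \<and> (\<Sum>i\<in>UNIV. x$i) = 1"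

definition distribution :: "real^'a::finite^'a \<Rightarrow> bool" where
  "distribution P \<longleftrightarrow> (\<forall>i j. 0 \<le> P$i$j) \<and> (\<Sum>i\<in>UNIV. \<Sum>j\<in>UNIV. P$i$j) = 1"

definition outer_self :: "real^'a::finite \<Rightarrow> real^'a^'a" where
  "outer_self x = (\<chi> i j. x$i * x$j)"

definition correlated_eq :: "('a::finite \<Rightarrow> 'a \<Rightarrow> real) \<Rightarrow> real^'a^'a \<Rightarrow> bool" where
  "correlated_eq u P \<longleftrightarrow> distribution P \<and>
     (\<forall>s1 t1. (\<Sum>s2\<in>UNIV. (util1 u t1 s2 - util1 u s1 s2) * P$s1$s2) \<le> 0) \<and>
     (\<forall>s2 t2. (\<Sum>s1\<in>UNIV. (util2 u s1 t2 - util2 u s1 s2) * P$s1$s2) \<le> 0)"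

definition Nash_sym :: "('a::finite \<Rightarrow> 'a \<Rightarrow> real) \<Rightarrow> (real^'a^'a) set" where
  "Nash_sym u = {outer_self x | x. prob_vec x \<and> correlated_eq u (outer_self x)}"

definition XE_sym :: "('a::finite \<Rightarrow> 'a \<Rightarrow> real) \<Rightarrow> (real^'a^'a) set" where
  "XE_sym u = {P. correlated_eq u P \<and> P \<in> convex hull {outer_self x | x. prob_vec x}}"

end

theory Submission
  imports Defs
begin

locale two =
  fixes x0 x1 :: "'a::finite"
  assumes U: "UNIV = {x0,x1}" and ne: "x0 \<noteq> x1"
begin

lemma sum2: "sum f UNIV = f x0 + f x1"
  using ne by (simp add: U)

lemma all2: "(\<forall>s. Q s) \<longleftrightarrow> Q x0 \<and> Q x1"
  by (metis UNIV_I U insertE singletonD)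

lemma cases2: "s = x0 \<or> s = x1"
  using U by auto

lemma dist_iff: "distribution P \<longleftrightarrow> 0 \<le> P$x0$x0 \<and> 0 \<le> P$x0$x1 \<and> 0 \<le> P$x1$x0 \<and> 0 \<le> P$x1$x1
   \<and> P$x0$x0 + P$x0$x1 + P$x1$x0 + P$x1$x1 = 1"
  unfolding distribution_def sum2 all2 by auto

lemma CE_iff: "correlated_eq u P \<longleftrightarrow> distribution P \<and>
   (u x1 x0 - u x0 x0) * P$x0$x0 + (u x1 x1 - u x0 x1) * P$x0$x1 \<le> 0 \<and>
   (u x1 x0 - u x0 x0) * P$x1$x0 + (u x1 x1 - u x0 x1) * P$x1$x1 \<ge> 0 \<and>
   (u x1 x0 - u x0 x0) * P$x0$x0 + (u x1 x1 - u x0 x1) * P$x1$x0 \<le> 0 \<and>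
   (u x1 x0 - u x0 x0) * P$x0$x1 + (u x1 x1 - u x0 x1) * P$x1$x1 \<ge> 0"
  unfolding correlated_eq_def sum2 all2 util1_def util2_def
  by (auto simp: algebra_simps)

definition vp :: "real \<Rightarrow> real^'a" where
  "vp p = (\<chi> i. if i = x0 then p else 1 - p)"

lemma vp0[simp]: "vp p $ x0 = p" and vp1[simp]: "vp p $ x1 = 1 - p"
  using ne by (auto simp: vp_def)

lemma prob_vp: "0 \<le> p \<Longrightarrow> p \<le> 1 \<Longrightarrow> prob_vec (vp p)"
  unfolding prob_vec_def sum2 all2 by simp

lemma outer[simp]: "outer_self x $ i $ j = x$i * x$j"
  by (simp add: outer_self_def)

end


lemma hull_psd:
  assumes "P \<in> convex hull {outer_self x | x. prob_vec x}"
  shows "(\<forall>i j. P$i$j = P$j$i) \<and> (\<forall>v. 0 \<le> (\<Sum>i\<in>UNIV. \<Sum>j\<in>UNIV. v i * v j * P$i$j))"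
proof -
  let ?T = "{P::real^'a^'a. (\<forall>i j. P$i$j = P$j$i) \<and> (\<forall>v. 0 \<le> (\<Sum>i\<in>UNIV. \<Sum>j\<in>UNIV. v i * v j * P$i$j))}"
  have "convex ?T"
  proof (rule convexI)
    fix x y :: "real^'a^'a" and a b :: real
    assume x: "x \<in> ?T" and y: "y \<in> ?T" and ab: "0 \<le> a" "0 \<le> b" "a + b = 1"
    have "\<forall>i j. (a *\<^sub>R x + b *\<^sub>R y)$i$j = (a *\<^sub>R x + b *\<^sub>R y)$j$i"
      using x y by simp
    moreover have "0 \<le> (\<Sum>i\<in>UNIV. \<Sum>j\<in>UNIV. v i * v j * (a *\<^sub>R x + b *\<^sub>R y)$i$j)" for v
    proof -
      have "(\<Sum>i\<in>UNIV. \<Sum>j\<in>UNIV. v i * v j * (a *\<^sub>R x + b *\<^sub>R y)$i$j)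
        = a * (\<Sum>i\<in>UNIV. \<Sum>j\<in>UNIV. v i * v j * x$i$j) + b * (\<Sum>i\<in>UNIV. \<Sum>j\<in>UNIV. v i * v j * y$i$j)"
        by (simp add: sum_distrib_left sum.distrib algebra_simps)
      moreover have "0 \<le> (\<Sum>i\<in>UNIV. \<Sum>j\<in>UNIV. v i * v j * x$i$j)"
        "0 \<le> (\<Sum>i\<in>UNIV. \<Sum>j\<in>UNIV. v i * v j * y$i$j)" using x y by auto
      ultimately show ?thesis using ab by simp
    qed
    ultimately show "a *\<^sub>R x + b *\<^sub>R y \<in> ?T" by blast
  qed
  moreover have "{outer_self x | x. prob_vec x} \<subseteq> ?T"
  proof clarify
    fix x :: "real^'a"
    have "(\<Sum>i\<in>UNIV. \<Sum>j\<in>UNIV. v i * v j * (x$i * x$j)) = (\<Sum>i\<in>UNIV. v i * x$i)^2" for v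
      by (simp add: power2_eq_square sum_product algebra_simps)
    then show "(\<forall>i j. outer_self x$i$j = outer_self x$j$i) \<and>
      (\<forall>v. 0 \<le> (\<Sum>i\<in>UNIV. \<Sum>j\<in>UNIV. v i * v j * outer_self x$i$j))"
      by (simp add: outer_self_def mult.commute)
  qed
  ultimately have "convex hull {outer_self x | x. prob_vec x} \<subseteq> ?T"
    by (rule hull_minimal[rotated])
  then show ?thesis using assms by blast
qed


context two begin

lemma psd2:
  assumes "P \<in> convex hull {outer_self x | x. prob_vec x}"
  shows "P$x1$x0 = P$x0$x1" "(P$x0$x1)^2 \<le> P$x0$x0 * P$x1$x1"
proof -
  from hull_psd[OF assms] have S: "\<forall>i j. P$i$j = P$j$i"
    and Q: "\<And>v. 0 \<le> (\<Sum>i\<in>UNIV. \<Sum>j\<in>UNIV. v i * v j * P$i$j)" by auto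
  show sy: "P$x1$x0 = P$x0$x1" using S by auto
  define a where "a = P$x0$x0"
  define b where "b = P$x1$x1"
  define c where "c = P$x0$x1"
  have q: "0 \<le> s * s * a + 2 * s * t * c + t * t * b" for s t
  proof -
    have "0 \<le> (\<Sum>i\<in>UNIV. \<Sum>j\<in>UNIV. (\<lambda>i. if i = x0 then s else t) i * (\<lambda>i. if i = x0 then s else t) j * P$i$j)"
      by (rule Q)
    then show ?thesis using ne sy unfolding sum2 a_def b_def c_def by (simp add: algebra_simps)
  qed
  have a0: "0 \<le> a" using q[of 1 0] by simp
  show "(P$x0$x1)^2 \<le> P$x0$x0 * P$x1$x1"
  proof (cases "a > 0")
    case True
    have "0 \<le> a * (a*b - c^2)" using q[of c "-a"] by (simp add: algebra_simps power2_eq_square)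
    then have "0 \<le> a*b - c^2" using True by (simp add: zero_le_mult_iff)
    then show ?thesis by (simp add: a_def b_def c_def)
  next
    case False
    then have a: "a = 0" using a0 by simp
    have "c = 0"
    proof (rule ccontr)
      assume "c \<noteq> 0"
      have "0 \<le> 2*(-(b+1)/(2*c))*c + b" using q[of "-(b+1)/(2*c)" 1] a by simp
      also have "\<dots> = -1" using \<open>c \<noteq> 0\<close> by (simp add: field_simps)
      finally show False by simp
    qed
    then show ?thesis using a by (simp add: a_def b_def c_def)
  qed
qed

abbreviation "d1 u \<equiv> u x1 x0 - u x0 x0"
abbreviation "d2 u \<equiv> u x1 x1 - u x0 x1"

lemma nash_vp:
  assumes "0 \<le> p" "p \<le> 1" "0 < p \<Longrightarrow> d1 u * p + d2 u * (1-p) \<le> 0"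
    "p < 1 \<Longrightarrow> 0 \<le> d1 u * p + d2 u * (1-p)"
  shows "outer_self (vp p) \<in> Nash_sym u"
proof -
  have A: "p * (d1 u * p + d2 u * (1-p)) \<le> 0"
    using assms by (cases "p = 0") (auto intro: mult_nonneg_nonpos)
  have B: "0 \<le> (1-p) * (d1 u * p + d2 u * (1-p))"
    using assms by (cases "p = 1") auto
  have "correlated_eq u (outer_self (vp p))"
  proof -
    have "p * p \<le> p" using assms(1,2) by (simp add: mult_left_le)
    moreover have "0 \<le> (1-p)*(1-p)" by simp
    ultimately show ?thesis
    unfolding CE_iff dist_iff using A B assms(1,2)
    by (simp add: algebra_simps)
  qed
  then show ?thesis unfolding Nash_sym_def using prob_vp[OF assms(1,2)] by blast
qed

end


context two begin

lemma mat_eq2: "(P::real^'a^'a) = Q \<longleftrightarrow> P$x0$x0 = Q$x0$x0 \<and> P$x0$x1 = Q$x0$x1 \<and> P$x1$x0 = Q$x1$x0 \<and> P$x1$x1 = Q$x1$x1"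
  unfolding vec_eq_iff all2 by auto

lemma dist_outer: "prob_vec (x::real^'a) \<Longrightarrow> distribution (outer_self x)"
proof -
  assume "prob_vec x"
  then have "0 \<le> x$x0" "0 \<le> x$x1" "x$x0 + x$x1 = 1" unfolding prob_vec_def sum2 by auto
  moreover have "(x$x0 + x$x1)^2 = x$x0*x$x0 + x$x0*x$x1 + x$x1*x$x0 + x$x1*x$x1"
    by (simp add: power2_eq_square algebra_simps)
  ultimately show ?thesis unfolding dist_iff by simp
qed

lemma conv3: "x \<in> S \<Longrightarrow> y \<in> S \<Longrightarrow> z \<in> S \<Longrightarrow> 0 \<le> \<alpha> \<Longrightarrow> 0 \<le> \<beta> \<Longrightarrow> 0 \<le> \<gamma> \<Longrightarrow> \<alpha> + \<beta> + \<gamma> = 1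
  \<Longrightarrow> \<alpha> *\<^sub>R x + \<beta> *\<^sub>R y + \<gamma> *\<^sub>R z \<in> convex hull S"
proof -
  assume h: "x \<in> S" "y \<in> S" "z \<in> S" "0 \<le> \<alpha>" "0 \<le> \<beta>" "0 \<le> \<gamma>" "\<alpha> + \<beta> + \<gamma> = 1"
  then have "\<alpha> *\<^sub>R x + \<beta> *\<^sub>R y + \<gamma> *\<^sub>R z \<in> convex hull {x,y,z}"
    unfolding convex_hull_3 by blast
  moreover have "convex hull {x,y,z} \<subseteq> convex hull S" using h by (intro hull_mono) auto
  ultimately show ?thesis by blast
qed

lemma convex_CE: "convex {P. correlated_eq (u::'a \<Rightarrow> 'a \<Rightarrow> real) P}"
proof (rule convexI)
  fix x y :: "real^'a^'a" and a b :: real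
  assume x: "x \<in> {P. correlated_eq u P}" and y: "y \<in> {P. correlated_eq u P}"
    and ab: "0 \<le> a" "0 \<le> b" "a + b = 1"
  let ?z = "a *\<^sub>R x + b *\<^sub>R y"
  have lin: "d1 u * ?z$i$j + d2 u * ?z$k$l = a * (d1 u * x$i$j + d2 u * x$k$l) + b * (d1 u * y$i$j + d2 u * y$k$l)" for i j k l
    by (simp add: algebra_simps)
  have lin2: "?z$i$j + ?z$k$l + ?z$m$n + ?z$p$q = a * (x$i$j + x$k$l + x$m$n + x$p$q) + b * (y$i$j + y$k$l + y$m$n + y$p$q)" for i j k l m n p q
    by (simp add: algebra_simps)
  from x y have X: "correlated_eq u x" and Y: "correlated_eq u y" by auto
  show "?z \<in> {P. correlated_eq u P}"
    using X Y ab
    unfolding mem_Collect_eq CE_iff dist_iff lin lin2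
    by (simp add: mult_nonneg_nonpos mult_nonneg_nonneg add_nonpos_nonpos add_nonneg_nonneg ab(3))
qed

end


context two begin

lemma XE_sub:
  fixes u :: "'a \<Rightarrow> 'a \<Rightarrow> real"
  assumes P: "P \<in> XE_sym u"
  shows "P \<in> convex hull (Nash_sym u)"
proof -
  have CE: "correlated_eq u P" and H: "P \<in> convex hull {outer_self x | x. prob_vec x}"
    using P unfolding XE_sym_def by auto
  define a where "a = P$x0$x0"
  define b where "b = P$x1$x1"
  define c where "c = P$x0$x1"
  define D1 where "D1 = d1 u"
  define D2 where "D2 = d2 u"
  have sy: "P$x1$x0 = c" using psd2(1)[OF H] c_def by simp
  have psd: "c^2 \<le> a * b" using psd2(2)[OF H] unfolding a_def b_def c_def .
  have a0: "0 \<le> a" and b0: "0 \<le> b" and c0: "0 \<le> c" and sum: "a + b + 2*c = 1"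
    and i1: "D1 * a + D2 * c \<le> 0" and i2: "0 \<le> D1 * c + D2 * b"
    using CE sy unfolding CE_iff dist_iff a_def b_def c_def D1_def D2_def by auto
  have Peq: "P = Q" if "Q$x0$x0 = a" "Q$x0$x1 = c" "Q$x1$x0 = c" "Q$x1$x1 = b" for Q
    using that sy unfolding mat_eq2 a_def b_def c_def by simp
  have E1: "outer_self (vp 1) \<in> Nash_sym u" if "D1 \<le> 0"
    using that by (intro nash_vp) (auto simp: D1_def)
  have E2: "outer_self (vp 0) \<in> Nash_sym u" if "0 \<le> D2"
    using that by (intro nash_vp) (auto simp: D2_def)
  have inh: "x \<in> convex hull (Nash_sym u)" if "x \<in> Nash_sym u" for x
    using that by (simp add: hull_inc)
  show ?thesis
  proof (cases "D1 > 0")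
    case d1p: True
    show ?thesis
    proof (cases "D2 \<ge> 0")
      case True
      have "D2 * c \<ge> 0" using True c0 by simp
      then have "a = 0" using i1 a0 d1p by (smt (verit) mult_pos_pos)
      then have "c = 0" using psd by simp
      then have "P = outer_self (vp 0)" using \<open>a = 0\<close> sum by (intro Peq) simp_all
      then show ?thesis using E2 True inh by simp
    next
      case False
      define D where "D = D1"
      define E where "E = - D2"
      have D: "D > 0" and E: "E > 0" using d1p False by (auto simp: D_def E_def)
      have j1: "D * a \<le> E * c" and j2: "E * b \<le> D * c" using i1 i2 by (auto simp: D_def E_def)
      have "(D * a) * (E * b) \<le> (E * c) * (D * c)"
        by (rule mult_mono[OF j1 j2]) (use D E a0 b0 c0 in auto)
      then have "(D*E) * (a*b) \<le> (D*E) * c^2" by (simp add: algebra_simps power2_eq_square)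
      then have "a*b \<le> c^2" using D E by (simp add: mult_le_cancel_left)
      then have abc: "a*b = c^2" using psd by simp
      have cp: "c > 0"
      proof (rule ccontr)
        assume "\<not> c > 0"
        then have "c = 0" using c0 by simp
        then have "a = 0" "b = 0" using j1 j2 D E a0 b0
          by (auto simp: mult_le_0_iff)
        then show False using sum \<open>c = 0\<close> by simp
      qed
      have ap: "a > 0" and bp: "b > 0" using abc cp a0 b0
        by (metis mult_eq_0_iff order_le_less power2_eq_square zero_less_mult_iff)+
      have ea: "D * a = E * c"
      proof (rule ccontr)
        assume "D * a \<noteq> E * c"
        then have "D * a < E * c" using j1 by simp
        then have "(D * a) * (E * b) < (E * c) * (E * b)" using E bp by (simp add: mult.commute)
        also have "\<dots> \<le> (E * c) * (D * c)" using j2 E cp by (intro mult_left_mono) auto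
        finally have "(D*E) * (a*b) < (D*E) * c^2" by (simp add: algebra_simps power2_eq_square)
        then show False using abc by simp
      qed
      have eb: "E * b = D * c"
      proof (rule ccontr)
        assume "E * b \<noteq> D * c"
        then have "E * b < D * c" using j2 by simp
        then have "(D * a) * (E * b) < (D * a) * (D * c)" using D ap by (simp add: mult.commute)
        also have "\<dots> = (E * c) * (D * c)" using ea by simp
        finally have "(D*E) * (a*b) < (D*E) * c^2" by (simp add: algebra_simps power2_eq_square)
        then show False using abc by simp
      qed
      define p where "p = E / (D + E)"
      have a': "a = E * c / D" using ea D by (simp add: field_simps)
      have b': "b = D * c / E" using eb E by (simp add: field_simps)
      have "c * (E*E + D*D + 2*D*E) = D * E" using sum D E unfolding a' b'
        by (simp add: field_simps)
      define S where "S = D + E"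
      have S: "S > 0" using D E by (simp add: S_def)
      then have "c * (S * S) = D * E" using \<open>c * (E*E + D*D + 2*D*E) = D * E\<close>
        by (simp add: S_def algebra_simps)
      then have c': "c = D * E / (S * S)" using S by (simp add: eq_divide_eq)
      have p': "p = E / S" by (simp add: p_def S_def)
      have p01: "0 \<le> p" "p \<le> 1" using D E by (auto simp: p_def field_simps)
      have g: "D1 * p + D2 * (1-p) = 0" using D E by (simp add: p_def D_def E_def field_simps)
      have N: "outer_self (vp p) \<in> Nash_sym u"
        using p01 g by (intro nash_vp) (auto simp: D1_def D2_def)
      have q': "1 - p = D / S" using S by (simp add: p' S_def field_simps)
      have "a = p * p" unfolding a' c' p' using D S by (simp add: field_simps)
      moreover have "b = (1-p) * (1-p)" unfolding b' c' q' using E S by (simp add: field_simps)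
      moreover have "c = p * (1-p)" unfolding c' q' p' using S by (simp add: field_simps) (simp add: S_def algebra_simps)
      ultimately have "P = outer_self (vp p)"
        by (intro Peq) (simp_all add: mult.commute)
      then show ?thesis using N inh by simp
    qed
  next
    case d1n: False
    show ?thesis
    proof (cases "D2 < 0")
      case True
      have "D1 * c \<le> 0" using d1n c0 by (simp add: mult_nonpos_nonneg)
      then have "b = 0" using i2 b0 True by (smt (verit) mult_neg_pos)
      then have "c = 0" using psd by simp
      then have "P = outer_self (vp 1)" using \<open>b = 0\<close> sum by (intro Peq) simp_all
      then show ?thesis using E1 d1n inh by simp
    next
      case False
      then have d2: "0 \<le> D2" by simp
      have d1: "D1 \<le> 0" using d1n by simp
      show ?thesis
      proof (cases "D1 = 0 \<and> D2 = 0")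
        case True
        have "{outer_self x | x. prob_vec x} \<subseteq> Nash_sym u"
        proof clarify
          fix x :: "real^'a" assume "prob_vec x"
          then have "correlated_eq u (outer_self x)"
            using True dist_outer unfolding CE_iff D1_def D2_def by simp
          then show "outer_self x \<in> Nash_sym u" unfolding Nash_sym_def using \<open>prob_vec x\<close> by blast
        qed
        then show ?thesis using H hull_mono by blast
      next
        case nz: False
        show ?thesis
        proof (cases "c = 0")
          case True
          have "P = a *\<^sub>R outer_self (vp 1) + b *\<^sub>R outer_self (vp 0)"
            using True by (intro Peq) simp_all
          moreover have "a *\<^sub>R outer_self (vp 1) + b *\<^sub>R outer_self (vp 0) \<in> convex hull (Nash_sym u)"
            using E1[OF d1] E2[OF d2] a0 b0 sum True
            by (intro convexD[OF convex_convex_hull] inh) auto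
          ultimately show ?thesis by simp
        next
          case False
          then have cp: "c > 0" using c0 by simp
          have D1n: "D1 < 0"
          proof (rule ccontr)
            assume "\<not> D1 < 0"
            then have "D1 = 0" using d1 by simp
            then have "D2 * c \<le> 0" using i1 by simp
            then have "D2 = 0" using cp d2 by (simp add: mult_le_0_iff)
            then show False using nz \<open>D1 = 0\<close> by simp
          qed
          have D2p: "D2 > 0"
          proof (rule ccontr)
            assume "\<not> D2 > 0"
            then have "D2 = 0" using d2 by simp
            then have "D1 * c \<ge> 0" using i2 by simp
            then show False using cp D1n by (simp add: zero_le_mult_iff)
          qed
          define D where "D = - D1"
          define F where "F = D2"
          have D: "D > 0" and F: "F > 0" using D1n D2p by (auto simp: D_def F_def)
          have j1: "F * c \<le> D * a" and j2: "D * c \<le> F * b" using i1 i2 by (auto simp: D_def F_def)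
          define p where "p = F / (F + D)"
          define \<alpha> where "\<alpha> = c * (F+D)^2 / (F*D)"
          define \<beta> where "\<beta> = a - c * F / D"
          define \<gamma> where "\<gamma> = b - c * D / F"
          have p01: "0 \<le> p" "p \<le> 1" using D F by (auto simp: p_def field_simps)
          have g: "D1 * p + D2 * (1-p) = 0" using D F by (simp add: p_def D_def F_def field_simps)
          have N: "outer_self (vp p) \<in> Nash_sym u"
            using p01 g by (intro nash_vp) (auto simp: D1_def D2_def)
          have al: "0 \<le> \<alpha>" using D F c0 by (simp add: \<alpha>_def)
          have be: "0 \<le> \<beta>" using j1 D by (simp add: \<beta>_def field_simps)
          have ga: "0 \<le> \<gamma>" using j2 F by (simp add: \<gamma>_def field_simps)
          have a1: "a = 1 - b - 2*c" using sum by simp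
          have s1: "\<alpha> + \<beta> + \<gamma> = 1" using D F unfolding \<alpha>_def \<beta>_def \<gamma>_def a1
            by (simp add: field_simps power2_eq_square)
          have "P = \<alpha> *\<^sub>R outer_self (vp p) + \<beta> *\<^sub>R outer_self (vp 1) + \<gamma> *\<^sub>R outer_self (vp 0)"
          proof -
            define S where "S = F + D"
            have S: "S > 0" using D F by (simp add: S_def)
            have al': "\<alpha> = c * S * S / (F * D)" by (simp add: \<alpha>_def S_def power2_eq_square)
            have p': "p = F / S" by (simp add: p_def S_def)
            have q': "1 - p = D / S" using S by (simp add: p' S_def field_simps)
            have e1: "\<alpha> * (p * p) + \<beta> = a" unfolding al' p' \<beta>_def using S D F by (simp add: field_simps)
            have e2: "\<alpha> * (p * (1-p)) = c" unfolding al' q' using S D F by (simp add: p' field_simps)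
            have e3: "\<alpha> * ((1-p) * (1-p)) + \<gamma> = b" unfolding al' q' \<gamma>_def using S D F by (simp add: field_simps)
            show ?thesis using e1 e2 e3 by (intro Peq) (simp_all add: algebra_simps)
          qed
          then show ?thesis using conv3[OF N E1[OF d1] E2[OF d2] al be ga s1] by simp
        qed
      qed
    qed
  qed
qed

end

theorem theorem3p6:
  fixes u :: "'a::finite \<Rightarrow> 'a \<Rightarrow> real"
  assumes "CARD('a) = 2"
  shows "convex hull (Nash_sym u) = XE_sym u"
proof -
  obtain x0 x1 :: 'a where "UNIV = {x0, x1}" "x0 \<noteq> x1"
    using assms card_2_iff by metis
  then interpret two x0 x1 by unfold_locales
  have XE: "XE_sym u = {P. correlated_eq u P} \<inter> convex hull {outer_self x | x. prob_vec x}"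
    unfolding XE_sym_def by auto
  have cXE: "convex (XE_sym u)" unfolding XE by (intro convex_Int convex_CE convex_convex_hull)
  have sub: "Nash_sym u \<subseteq> XE_sym u"
    unfolding Nash_sym_def XE_sym_def by (auto intro: hull_inc)
  show ?thesis
  proof
    show "convex hull Nash_sym u \<subseteq> XE_sym u" using sub cXE by (rule hull_minimal)
    show "XE_sym u \<subseteq> convex hull Nash_sym u" using XE_sub by blast
  qed
qed

end
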